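(* Let $\lambda\in\mathbb{R}\setminus\{0\}$ and $x_1,x_2,y_1,y_2\in\mathbb{R}$. Then for every integer $n\ge0$, \[ C_{n,\lambda}(x_1+x_2,y_1+y_2)=\sum_{k=0}^{n}\binom{n}{k}\Big\{C_{n-k,\lambda}(x_1,y_1)C_{k,\lambda}(x_2,y_2)-S_{n-k,\lambda}(x_1,y_1)S_{k,\lambda}(x_2,y_2)\Big\} \] and \[ S_{n,\lambda}(x_1+x_2,y_1+y_2)=\sum_{k=0}^{n}\binom{n}{k}\Big\{S_{n-k,\lambda}(x_1,y_1)C_{k,\lambda}(x_2,y_2)+C_{n-k,\lambda}(x_1,y_1)S_{k,\lambda}(x_2,y_2)\Big\}. \]
   Context: All generating functions are formal power series in $t$. For $z\in\mathbb{C}$: $(z)_{0,\lambda}=1$ and $(z)_{n,\lambda}=z(z-\lambda)\cdots(z-(n-1)\lambda)$ for $n\ge1$. The degenerate exponential is $e_\lambda^{z}(t)=\sum_{n\ge0}(z)_{n,\lambda}\frac{t^n}{n!}$ (i.e. $(1+\lambda t)^{z/\lambda}$). The degenerate cosine and sine are $\cos_\lambda^{(y)}(t)=\frac{e_\lambda^{iy}(t)+e_\lambda^{-iy}(t)}{2}$ and $\sin_\lambda^{(y)}(t)=\frac{e_\lambda^{iy}(t)-e_\lambda^{-iy}(t)}{2i}$. The degenerate two-parametric polynomials $C_{n,\lambda}(x,y)$ and $S_{n,\lambda}(x,y)$ are defined by $e_\lambda^{x}(t)\cos_\lambda^{(y)}(t)=\sum_{n\ge0}C_{n,\lambda}(x,y)\frac{t^n}{n!}$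 and $e_\lambda^{x}(t)\sin_\lambda^{(y)}(t)=\sum_{n\ge0}S_{n,\lambda}(x,y)\frac{t^n}{n!}$. *)

theory Defs
  imports Complex_Main "HOL-Computational_Algebra.Formal_Power_Series"
begin

definition deg_fall :: "complex \<Rightarrow> real \<Rightarrow> nat \<Rightarrow> complex" where
  "deg_fall z lam n = (\<Prod>j<n. z - of_nat j * complex_of_real lam)"

definition deg_exp :: "real \<Rightarrow> complex \<Rightarrow> complex fps" where
  "deg_exp lam z = Abs_fps (\<lambda>n. deg_fall z lam n / fact n)"

definition deg_cos :: "real \<Rightarrow> real \<Rightarrow> complex fps" where
  "deg_cos lam y = (deg_exp lam (\<i> * of_real y) + deg_exp lam (- \<i> * of_real y)) / fps_const 2"

definition deg_sin :: "real \<Rightarrow> real \<Rightarrow> complex fps" where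
  "deg_sin lam y = (deg_exp lam (\<i> * of_real y) - deg_exp lam (- \<i> * of_real y)) / fps_const (2 * \<i>)"

definition degC :: "nat \<Rightarrow> real \<Rightarrow> real \<Rightarrow> real \<Rightarrow> complex" where
  "degC n lam x y = fact n * fps_nth (deg_exp lam (of_real x) * deg_cos lam y) n"

definition degS :: "nat \<Rightarrow> real \<Rightarrow> real \<Rightarrow> real \<Rightarrow> complex" where
  "degS n lam x y = fact n * fps_nth (deg_exp lam (of_real x) * deg_sin lam y) n"

end

theory Submission imports Defs begin
lemma deg_fall_gchoose:
  assumes "lam \<noteq> 0"
  shows "deg_fall z lam n / fact n = (of_real lam)^n * ((z / of_real lam) gchoose n)"
proof -
  let ?L = "complex_of_real lam"
  have L: "?L \<noteq> 0" using assms by simp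
  have "deg_fall z lam n = (\<Prod>j<n. ?L * (z / ?L - of_nat j))"
    unfolding deg_fall_def using L by (intro prod.cong) (auto simp: field_simps)
  also have "\<dots> = ?L^n * (\<Prod>j=0..<n. z / ?L - of_nat j)"
    by (simp add: prod.distrib atLeast0LessThan)
  finally show ?thesis by (simp add: gbinomial_prod_rev)
qed

lemma deg_exp_mult:
  assumes "lam \<noteq> 0"
  shows "deg_exp lam a * deg_exp lam b = deg_exp lam (a + b)"
proof (rule fps_ext)
  fix n
  let ?L = "complex_of_real lam"
  have "fps_nth (deg_exp lam a * deg_exp lam b) n = (\<Sum>k=0..n. ?L^k * ((a/?L) gchoose k) * (?L^(n-k) * ((b/?L) gchoose (n-k))))"
    by (simp add: fps_mult_nth deg_exp_def deg_fall_gchoose[OF assms])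
  also have "\<dots> = (\<Sum>k=0..n. ?L^n * (((a/?L) gchoose k) * ((b/?L) gchoose (n-k))))"
    by (intro sum.cong refl) (simp add: power_add[symmetric] mult_ac)
  also have "\<dots> = ?L^n * ((a/?L + b/?L) gchoose n)"
    by (simp add: sum_distrib_left[symmetric] gbinomial_Vandermonde)
  also have "\<dots> = fps_nth (deg_exp lam (a+b)) n"
    by (simp add: deg_exp_def deg_fall_gchoose[OF assms] add_divide_distrib)
  finally show "fps_nth (deg_exp lam a * deg_exp lam b) n = fps_nth (deg_exp lam (a+b)) n" .
qed

lemma coeff_prod:
  fixes F G :: "complex fps"
  shows "fact n * fps_nth (F * G) n = (\<Sum>k=0..n. of_nat (n choose k) * ((fact (n-k) * fps_nth F (n-k)) * (fact k * fps_nth G k)))"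
proof -
  have "fps_nth (F * G) n = fps_nth (G * F) n" by (simp add: mult.commute)
  hence "fact n * fps_nth (F * G) n = (\<Sum>k=0..n. fact n * (fps_nth G k * fps_nth F (n-k)))"
    by (simp add: fps_mult_nth sum_distrib_left)
  also have "\<dots> = (\<Sum>k=0..n. of_nat (n choose k) * ((fact (n-k) * fps_nth F (n-k)) * (fact k * fps_nth G k)))"
  proof (intro sum.cong refl)
    fix k assume "k \<in> {0..n}"
    hence "fact k * fact (n-k) * (n choose k) = fact n" by (simp add: binomial_fact_lemma)
    hence "(fact n :: complex) = of_nat (fact k * fact (n-k) * (n choose k))" by (metis of_nat_fact)
    thus "fact n * (fps_nth G k * fps_nth F (n-k)) = of_nat (n choose k) * ((fact (n-k) * fps_nth F (n-k)) * (fact k * fps_nth G k))"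
      by (simp add: of_nat_mult mult_ac)
  qed
  finally show ?thesis .
qed

lemma fid:
  assumes "lam \<noteq> 0"
  shows "deg_exp lam (of_real (x1+x2)) * deg_cos lam (y1+y2) =
     (deg_exp lam (of_real x1) * deg_cos lam y1) * (deg_exp lam (of_real x2) * deg_cos lam y2)
   - (deg_exp lam (of_real x1) * deg_sin lam y1) * (deg_exp lam (of_real x2) * deg_sin lam y2)"
  and "deg_exp lam (of_real (x1+x2)) * deg_sin lam (y1+y2) =
     (deg_exp lam (of_real x1) * deg_sin lam y1) * (deg_exp lam (of_real x2) * deg_cos lam y2)
   + (deg_exp lam (of_real x1) * deg_cos lam y1) * (deg_exp lam (of_real x2) * deg_sin lam y2)"
proof -
  let ?E = "deg_exp lam"
  have m: "\<And>a b. ?E a * ?E b = ?E (a+b)" using deg_exp_mult[OF assms] .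
  have ex: "?E (of_real (x1+x2)) = ?E (of_real x1) * ?E (of_real x2)" by (simp add: m)
  have ep: "?E (\<i> * of_real (y1+y2)) = ?E (\<i> * of_real y1) * ?E (\<i> * of_real y2)" by (simp add: m algebra_simps)
  have em: "?E (- \<i> * of_real (y1+y2)) = ?E (- \<i> * of_real y1) * ?E (- \<i> * of_real y2)" by (simp add: m algebra_simps)
  define A where "A = fps_const (inverse (2::complex))"
  define B where "B = fps_const (inverse (2*\<i>))"
  have "A + A = fps_const (inverse 2 + inverse 2)" unfolding A_def by (simp only: fps_const_add)
  hence hA: "A + A = 1" by simp
  have "B * B = fps_const (inverse (2*\<i>) * inverse (2*\<i>))" "- (A * A) = fps_const (- (inverse 2 * inverse 2))"
    unfolding A_def B_def by (simp_all only: fps_const_mult fps_const_neg)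
  moreover have "inverse (2*\<i>) * inverse (2*\<i>) = - (inverse 2 * inverse (2::complex))" by (simp add: field_simps)
  ultimately have hB: "B * B = - (A * A)" by simp
  have hC: "deg_cos lam = (\<lambda>y. A * (?E (\<i> * of_real y) + ?E (- \<i> * of_real y)))"
    unfolding deg_cos_def A_def by (auto simp: fun_eq_iff)
  have hS: "deg_sin lam = (\<lambda>y. B * (?E (\<i> * of_real y) - ?E (- \<i> * of_real y)))"
    unfolding deg_sin_def B_def by (auto simp: fun_eq_iff)
  show "?E (of_real (x1+x2)) * deg_cos lam (y1+y2) =
     (?E (of_real x1) * deg_cos lam y1) * (?E (of_real x2) * deg_cos lam y2)
   - (?E (of_real x1) * deg_sin lam y1) * (?E (of_real x2) * deg_sin lam y2)"
    unfolding hC hS ex ep em using hA hB by algebra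
  show "?E (of_real (x1+x2)) * deg_sin lam (y1+y2) =
     (?E (of_real x1) * deg_sin lam y1) * (?E (of_real x2) * deg_cos lam y2)
   + (?E (of_real x1) * deg_cos lam y1) * (?E (of_real x2) * deg_sin lam y2)"
    unfolding hC hS ex ep em using hA hB by algebra
qed
lemma coeff_sub:
  fixes F1 F2 G1 G2 :: "complex fps"
  shows "fact n * fps_nth (F1 * G1 - F2 * G2) n = (\<Sum>k=0..n. of_nat (n choose k) *
     ((fact (n-k) * fps_nth F1 (n-k)) * (fact k * fps_nth G1 k) - (fact (n-k) * fps_nth F2 (n-k)) * (fact k * fps_nth G2 k)))"
  by (simp only: fps_sub_nth right_diff_distrib coeff_prod sum_subtractf)

lemma coeff_add:
  fixes F1 F2 G1 G2 :: "complex fps"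
  shows "fact n * fps_nth (F1 * G1 + F2 * G2) n = (\<Sum>k=0..n. of_nat (n choose k) *
     ((fact (n-k) * fps_nth F1 (n-k)) * (fact k * fps_nth G1 k) + (fact (n-k) * fps_nth F2 (n-k)) * (fact k * fps_nth G2 k)))"
  by (simp only: fps_add_nth distrib_left coeff_prod sum.distrib)

theorem theorem7:
  fixes lam x1 x2 y1 y2 :: real and n :: nat
  assumes "lam \<noteq> 0"
  shows "degC n lam (x1 + x2) (y1 + y2) =
           (\<Sum>k=0..n. of_nat (n choose k) *
              (degC (n - k) lam x1 y1 * degC k lam x2 y2 - degS (n - k) lam x1 y1 * degS k lam x2 y2)) \<and>
         degS n lam (x1 + x2) (y1 + y2) =
           (\<Sum>k=0..n. of_nat (n choose k) *
              (degS (n - k) lam x1 y1 * degC k lam x2 y2 + degC (n - k) lam x1 y1 * degS k lam x2 y2))"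
proof
  show "degC n lam (x1 + x2) (y1 + y2) =
           (\<Sum>k=0..n. of_nat (n choose k) *
              (degC (n - k) lam x1 y1 * degC k lam x2 y2 - degS (n - k) lam x1 y1 * degS k lam x2 y2))"
    unfolding degC_def degS_def fid(1)[OF assms, of x1 x2 y1 y2] coeff_sub ..
  show "degS n lam (x1 + x2) (y1 + y2) =
           (\<Sum>k=0..n. of_nat (n choose k) *
              (degS (n - k) lam x1 y1 * degC k lam x2 y2 + degC (n - k) lam x1 y1 * degS k lam x2 y2))"
    unfolding degC_def degS_def fid(2)[OF assms, of x1 x2 y1 y2] coeff_add ..
qed

end
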